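(* In the space $\widetilde{l_1}$, the sequence $\{2^{-i}e_{2^i}\}_{i=0}^\infty$ is equivalent to the canonical basis of $l_1$; that is, there are constants $0<c\le C$ such that $c\sum_{i=0}^n|c_i|\le\big\|\sum_{i=0}^nc_i2^{-i}e_{2^i}\big\|_{\widetilde{l_1}}\le C\sum_{i=0}^n|c_i|$ for all $n$ and all scalars $c_0,\dots,c_n$.
   Context: $e_m$ denotes the $m$-th unit vector sequence. For a real sequence $a=(a_n)_{n\ge1}$ let $\widetilde{a_n}=\sup_{k\ge n}|a_k|$; $\widetilde{l_1}$ is the space of sequences with $\|a\|_{\widetilde{l_1}}=\sum_{n\ge1}\widetilde{a_n}<\infty$. *)

theory Defs
  imports "HOL-Analysis.Analysis"
begin

text \<open>Real sequences are functions nat \<Rightarrow> real; only indices n \<ge> 1 are used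
  (index 0 is ignored by all definitions below).\<close>

definition unit_seq :: "nat \<Rightarrow> nat \<Rightarrow> real" where
  "unit_seq m = (\<lambda>k. if k = m then 1 else 0)"

definition tilde :: "(nat \<Rightarrow> real) \<Rightarrow> nat \<Rightarrow> real" where
  "tilde a n = (SUP k\<in>{n..}. \<bar>a k\<bar>)"

definition ltilde_norm :: "(nat \<Rightarrow> real) \<Rightarrow> real" where
  "ltilde_norm a = (\<Sum>n. tilde a (Suc n))"

end

theory Submission
  imports Defs
begin

lemma lower_aux:
  fixes f d :: "nat \<Rightarrow> real"
  assumes d: "\<And>j. 0 \<le> d j"
    and f: "\<And>j m. j \<le> N \<Longrightarrow> m < 2^j \<Longrightarrow> d j / 2^j \<le> f m"
  shows "n \<le> N \<Longrightarrow> (\<Sum>j\<le>n. d j) / 2 \<le> (\<Sum>m<2^n. f m)"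
proof (induction n)
  case 0
  have "d 0 \<le> f 0" using f[of 0 0] by simp
  then show ?case using d[of 0] by simp
next
  case (Suc n)
  have IH: "(\<Sum>j\<le>n. d j) / 2 \<le> (\<Sum>m<2^n. f m)" using Suc by simp
  have split: "(\<Sum>m<2^Suc n. f m) = (\<Sum>m<2^n. f m) + (\<Sum>m\<in>{2^n..<2^Suc n}. f m)"
  proof -
    have "(\<Sum>m<2^Suc n. f m) = (\<Sum>m\<in>{0..<2^Suc n}. f m)" by (simp add: lessThan_atLeast0)
    also have "\<dots> = (\<Sum>m\<in>{0..<2^n}. f m) + (\<Sum>m\<in>{2^n..<2^Suc n}. f m)"
      by (rule sum.atLeastLessThan_concat[symmetric]) auto
    finally show ?thesis by (simp add: lessThan_atLeast0)
  qed
  have "real (card {2^n..<(2::nat)^Suc n}) * (d (Suc n) / 2^Suc n) \<le> (\<Sum>m\<in>{2^n..<2^Suc n}. f m)"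
    by (rule sum_bounded_below) (use f[of "Suc n"] Suc.prems in auto)
  moreover have "real (card {2^n..<(2::nat)^Suc n}) * (d (Suc n) / 2^Suc n) = d (Suc n) / 2"
    by simp
  ultimately show ?case using IH split by simp
qed

theorem theorem2:
  shows "\<exists>c C :: real. 0 < c \<and> c \<le> C \<and>
    (\<forall>(n::nat) (cs::nat \<Rightarrow> real).
       c * (\<Sum>i\<le>n. \<bar>cs i\<bar>)
         \<le> ltilde_norm (\<lambda>k. \<Sum>i\<le>n. cs i * (2::real) powi (- int i) * unit_seq (2 ^ i) k) \<and>
       ltilde_norm (\<lambda>k. \<Sum>i\<le>n. cs i * (2::real) powi (- int i) * unit_seq (2 ^ i) k)
         \<le> C * (\<Sum>i\<le>n. \<bar>cs i\<bar>))"
proof (rule exI[of _ "1/2"], rule exI[of _ 1], intro conjI allI)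
  fix n :: nat and cs :: "nat \<Rightarrow> real"
  define a where "a = (\<lambda>k. \<Sum>i\<le>n. cs i * (2::real) powi (- int i) * unit_seq (2 ^ i) k)"
  have pw: "\<And>i. (2::real) powi (- int i) = 1 / 2^i" by (simp add: power_int_minus divide_inverse)
  have A1: "\<bar>a k\<bar> \<le> (\<Sum>i\<le>n. (if k = 2^i then \<bar>cs i\<bar> / 2^i else 0))" for k
    unfolding a_def
    by (rule order_trans[OF sum_abs], rule sum_mono) (auto simp: pw unit_seq_def abs_mult)
  have A2: "j \<le> n \<Longrightarrow> a (2^j) = cs j / 2^j" for j
    unfolding a_def by (simp add: pw unit_seq_def if_distrib cong: if_cong)
  define S where "S = (\<Sum>i\<le>n. \<bar>cs i\<bar> / 2^i)"
  have bdd: "bdd_above ((\<lambda>k. \<bar>a k\<bar>) ` {m..})" for m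
  proof -
    have "\<bar>a k\<bar> \<le> S" for k unfolding S_def
      by (rule order_trans[OF A1], rule sum_mono) auto
    then show ?thesis by (intro bdd_aboveI2)
  qed
  have T0: "0 \<le> tilde a m" for m
    unfolding tilde_def by (rule cSUP_upper2[OF bdd, of m]) auto
  have Tlow: "j \<le> n \<Longrightarrow> m \<le> 2^j \<Longrightarrow> \<bar>cs j\<bar> / 2^j \<le> tilde a m" for j m
    unfolding tilde_def by (rule cSUP_upper2[OF bdd, of "2^j"]) (auto simp: A2)
  have Tup: "tilde a m \<le> (\<Sum>i\<le>n. (if m \<le> 2^i then \<bar>cs i\<bar> / 2^i else 0))" for m
    unfolding tilde_def
  proof (rule cSUP_least)
    show "{m..} \<noteq> {}" by auto
    fix k assume "k \<in> {m..}"
    then show "\<bar>a k\<bar> \<le> (\<Sum>i\<le>n. (if m \<le> 2^i then \<bar>cs i\<bar> / 2^i else 0))"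
      by (intro order_trans[OF A1] sum_mono) auto
  qed
  have Tzero: "2^n < m \<Longrightarrow> tilde a m = 0" for m
  proof -
    assume m: "2^n < m"
    have "\<And>i. i \<le> n \<Longrightarrow> \<not> m \<le> 2^i"
    proof -
      fix i :: nat assume "i \<le> n"
      then have "(2::nat)^i \<le> 2^n" by (simp add: power_increasing)
      then show "\<not> m \<le> 2^i" using m by linarith
    qed
    then have "tilde a m \<le> 0" using Tup[of m] by simp
    then show ?thesis using T0[of m] by linarith
  qed
  have norm: "ltilde_norm a = (\<Sum>m<2^n. tilde a (Suc m))"
    unfolding ltilde_norm_def
    by (rule suminf_finite) (auto intro!: Tzero)
  have "(\<Sum>i\<le>n. \<bar>cs i\<bar>) / 2 \<le> (\<Sum>m<2^n. tilde a (Suc m))"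
    by (rule lower_aux[of "\<lambda>j. \<bar>cs j\<bar>" n]) (auto intro!: Tlow)
  then have "1/2 * (\<Sum>i\<le>n. \<bar>cs i\<bar>) \<le> ltilde_norm a" using norm by simp
  then show "1/2 * (\<Sum>i\<le>n. \<bar>cs i\<bar>) \<le> ltilde_norm (\<lambda>k. \<Sum>i\<le>n. cs i * (2::real) powi (- int i) * unit_seq (2 ^ i) k)" by (simp only: a_def)
  have "(\<Sum>m<2^n. tilde a (Suc m)) \<le> (\<Sum>m<2^n. \<Sum>i\<le>n. (if Suc m \<le> 2^i then \<bar>cs i\<bar> / 2^i else 0))"
    by (rule sum_mono) (rule Tup)
  also have "\<dots> = (\<Sum>i\<le>n. \<Sum>m<(2::nat)^n. (if m \<in> {..<2^i} then \<bar>cs i\<bar> / 2^i else 0))"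
    by (subst sum.swap) (simp add: Suc_le_eq)
  also have "\<dots> = (\<Sum>i\<le>n. \<Sum>m\<in>{..<(2::nat)^n} \<inter> {..<2^i}. \<bar>cs i\<bar> / 2^i)"
  proof (rule sum.cong[OF refl])
    fix i
    show "(\<Sum>m<(2::nat)^n. (if m \<in> {..<2^i} then \<bar>cs i\<bar> / 2^i else 0)) = (\<Sum>m\<in>{..<(2::nat)^n} \<inter> {..<2^i}. \<bar>cs i\<bar> / 2^i)"
      using sum.inter_restrict[of "{..<(2::nat)^n}" "\<lambda>_. \<bar>cs i\<bar> / 2^i" "{..<2^i}"] by simp
  qed
  also have "\<dots> = (\<Sum>i\<le>n. \<bar>cs i\<bar>)"
  proof (rule sum.cong[OF refl])
    fix i assume "i \<in> {..n}"
    then have "(2::nat)^i \<le> 2^n" by (simp add: power_increasing)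
    then have "{..<2^n} \<inter> {..<2^i} = {..<(2::nat)^i}" using less_le_trans by blast
    then show "(\<Sum>m\<in>{..<(2::nat)^n} \<inter> {..<2^i}. \<bar>cs i\<bar> / 2^i) = \<bar>cs i\<bar>" by simp
  qed
  finally have "ltilde_norm a \<le> 1 * (\<Sum>i\<le>n. \<bar>cs i\<bar>)" using norm by simp
  then show "ltilde_norm (\<lambda>k. \<Sum>i\<le>n. cs i * (2::real) powi (- int i) * unit_seq (2 ^ i) k) \<le> 1 * (\<Sum>i\<le>n. \<bar>cs i\<bar>)" unfolding a_def by simp
qed simp_all

end
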